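(* Let $\alpha=(\alpha_1,\ldots,\alpha_m)$ be a partition of $n$ and $r\ge 1$ an integer. Then $$\mathbf{C}_{\alpha}(\mathbf{z})\circ p_1^r=\mathbf{C}_{\alpha^r}(\mathbf{z}),$$ where $\alpha^r$ is the partition of $nr$ containing exactly $r$ copies of each part of $\alpha$, and $\circ$ denotes plethysm.
   Context: For a partition $\alpha$ of $n$ let $\sigma_\alpha\in S_n$ be any permutation of cycle type $\alpha$ and $o(\sigma_\alpha)$ its order. The cyclic symmetric function of the first kind is $\mathbf{C}_\alpha(\mathbf{z})=\frac{1}{o(\sigma_\alpha)}\sum_{g\in\langle\sigma_\alpha\rangle}p_{\lambda(g)}$, where $\lambda(g)$ is the cycle type of $g$ and $p_\lambda$ is the power-sum symmetric function (this is the cycle index series of the molecular species $X^n/\langle\sigma_\alpha\rangle$). Plethysm with $p_1^r$: $f\circ p_1^r$ is obtained from $f$ (written in power sums) by substituting $p_k\mapsto p_k^r$ for all $k$. *)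

theory Defs
  imports Complex_Main "HOL-Library.Multiset" "HOL-Combinatorics.Permutations" "HOL-Combinatorics.Orbits"
begin

text \<open>Symmetric functions of homogeneous degree are represented by their coordinates in the
  power-sum basis: a function mapping each partition (a multiset of positive naturals) lambda to
  the coefficient of p_lambda.  (Only finitely many coefficients are nonzero.)\<close>

type_synonym symfun = "nat multiset \<Rightarrow> rat"

definition is_partition :: "nat \<Rightarrow> nat multiset \<Rightarrow> bool" where
  "is_partition n \<alpha> \<longleftrightarrow> (\<forall>k \<in># \<alpha>. 0 < k) \<and> sum_mset \<alpha> = n"

definition cycle_type :: "nat \<Rightarrow> (nat \<Rightarrow> nat) \<Rightarrow> nat multiset" where
  "cycle_type n g = image_mset card (mset_set ((\<lambda>x. orbit g x) ` {..<n}))"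

definition cyc_gp :: "(nat \<Rightarrow> nat) \<Rightarrow> (nat \<Rightarrow> nat) set" where
  "cyc_gp \<sigma> = {\<sigma> ^^ k | k. True}"

definition perm_order :: "(nat \<Rightarrow> nat) \<Rightarrow> nat" where
  "perm_order \<sigma> = card (cyc_gp \<sigma>)"

text \<open>Cyclic symmetric function of the first kind, C = (1/o(sigma)) * sum over g in <sigma> of
  p_(cycle type of g), in power-sum coordinates.\<close>
definition cyclic_C :: "nat \<Rightarrow> (nat \<Rightarrow> nat) \<Rightarrow> symfun" where
  "cyclic_C n \<sigma> = (\<lambda>\<mu>. (\<Sum>g\<in>cyc_gp \<sigma>. if cycle_type n g = \<mu> then 1 else 0) / of_nat (perm_order \<sigma>))"

text \<open>Plethysm with p_1^r: substitute p_k := p_k^r, which sends p_lambda to p_(lambda^r),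
  lambda^r = r copies of each part.  Coefficientwise: collect all lambda mapping to mu.\<close>
definition plethysm_p1_pow :: "symfun \<Rightarrow> nat \<Rightarrow> symfun" where
  "plethysm_p1_pow f r = (\<lambda>\<mu>. \<Sum>la\<in>{la. repeat_mset r la = \<mu> \<and> f la \<noteq> 0}. f la)"

end

theory Submission
  imports Defs
begin

lemma my_permutes_funpow: "g permutes S \<Longrightarrow> (g ^^ k) permutes S"
  by (induction k) (auto intro: permutes_compose permutes_id)

definition ctype :: "nat set \<Rightarrow> (nat \<Rightarrow> nat) \<Rightarrow> nat multiset" where
  "ctype A h = image_mset card (mset_set ((\<lambda>x. orbit h x) ` A))"

lemma orbit_sub_inv: "\<forall>x\<in>S. f x \<in> S \<Longrightarrow> y \<in> S \<Longrightarrow> orbit f y \<subseteq> S"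
proof
  fix z assume "\<forall>x\<in>S. f x \<in> S" "y \<in> S" "z \<in> orbit f y"
  from \<open>z \<in> orbit f y\<close> show "z \<in> S" using \<open>\<forall>x\<in>S. f x \<in> S\<close> \<open>y \<in> S\<close>
    by (induction rule: orbit.induct) auto
qed

lemma funpow_inv: "\<forall>x\<in>S. f x \<in> S \<Longrightarrow> \<forall>x\<in>S. (f ^^ k) x \<in> S"
  by (induction k) auto

lemma ctype_split:
  assumes "finite A" "finite B" "A \<inter> B = {}"
    and "\<forall>x\<in>A. orbit h x \<subseteq> A" "\<forall>x\<in>B. orbit h x \<subseteq> B"
  shows "ctype (A \<union> B) h = ctype A h + ctype B h"
proof -
  have d: "(\<lambda>x. orbit h x) ` A \<inter> (\<lambda>x. orbit h x) ` B = {}"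
  proof (rule ccontr)
    assume "\<not> ?thesis"
    then obtain x y where "x \<in> A" "y \<in> B" "orbit h x = orbit h y" by auto
    then have "orbit h x \<subseteq> A" "orbit h x \<subseteq> B" using assms(4,5) by auto
    then show False using assms(3) orbit_nonempty[of h x] by auto
  qed
  show ?thesis unfolding ctype_def
    by (simp add: image_Un mset_set_Union[OF _ _ d] assms)
qed

lemma in_mset_set_imp: "x \<in># mset_set S \<Longrightarrow> x \<in> S"
  by (cases "finite S") auto

lemma ctype_conj:
  assumes bij: "bij_betw \<phi> A B" and inv: "\<forall>x\<in>A. h x \<in> A"
    and eq: "\<forall>x\<in>A. h' (\<phi> x) = \<phi> (h x)" and self: "\<forall>x\<in>A. x \<in> orbit h x"
  shows "ctype B h' = ctype A h"
proof -
  have orb: "orbit h' (\<phi> x) = \<phi> ` orbit h x" if "x \<in> A" for x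
    using orbit_inverse[of x h h' \<phi>] self that eq orbit_sub_inv[OF inv that] by auto
  have B: "B = \<phi> ` A" using bij by (simp add: bij_betw_def)
  have "(\<lambda>x. orbit h' x) ` B = (\<lambda>S. \<phi> ` S) ` ((\<lambda>x. orbit h x) ` A)"
    unfolding B image_image using orb by auto
  moreover have inj: "inj_on (\<lambda>S. \<phi> ` S) ((\<lambda>x. orbit h x) ` A)"
    apply (rule inj_on_image)
    using bij orbit_sub_inv[OF inv] by (auto simp: bij_betw_def intro: inj_on_subset)
  ultimately have "mset_set ((\<lambda>x. orbit h' x) ` B) = image_mset (\<lambda>S. \<phi> ` S) (mset_set ((\<lambda>x. orbit h x) ` A))"
    by (simp add: image_mset_mset_set)
  moreover have "card (\<phi> ` S) = card S" if S: "S \<in> (\<lambda>x. orbit h x) ` A" for S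
  proof -
    obtain x where x: "x \<in> A" "S = orbit h x" using S by blast
    have "S \<subseteq> A" using orbit_sub_inv[OF inv x(1)] x(2) by simp
    then have "inj_on \<phi> S" using bij unfolding bij_betw_def using inj_on_subset by blast
    then show ?thesis by (rule card_image)
  qed
  ultimately show ?thesis unfolding ctype_def
  proof -
    assume m: "mset_set (orbit h' ` B) = image_mset ((`) \<phi>) (mset_set (orbit h ` A))"
      and c: "\<And>S. S \<in> orbit h ` A \<Longrightarrow> card (\<phi> ` S) = card S"
    have "image_mset card (mset_set (orbit h' ` B)) = image_mset (\<lambda>S. card (\<phi> ` S)) (mset_set (orbit h ` A))"
      unfolding m by (simp add: multiset.map_comp o_def)
    also have "\<dots> = image_mset card (mset_set (orbit h ` A))"
    proof (rule image_mset_cong[where M="mset_set (orbit h ` A)" and f="\<lambda>S. card (\<phi> ` S)" and g=card])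
      fix S assume "S \<in># mset_set (orbit h ` A)"
      then have "S \<in> orbit h ` A" by (rule in_mset_set_imp)
      then show "card (\<phi> ` S) = card S" by (rule c)
    qed
    finally show "image_mset card (mset_set (orbit h' ` B)) = image_mset card (mset_set (orbit h ` A))" .
  qed
qed


definition rotk :: "nat \<Rightarrow> nat \<Rightarrow> nat \<Rightarrow> nat" where
  "rotk a k i = (i + k) mod a"

definition Gk :: "nat \<Rightarrow> nat \<Rightarrow> nat multiset" where
  "Gk k a = ctype {..<a} (rotk a k)"

lemma rot_pow: "i < a \<Longrightarrow> ((rotk a k) ^^ m) i = (i + m * k) mod a"
proof (induction m)
  case 0 then show ?case by simp
next
  case (Suc m)
  have "((i + m * k) mod a + k) mod a = (i + m * k + k) mod a" by (rule mod_add_left_eq)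
  then show ?case using Suc by (simp add: rotk_def algebra_simps)
qed

lemma rot_self: "i < a \<Longrightarrow> i \<in> orbit (rotk a k) i"
proof -
  assume i: "i < a"
  have "((rotk a k) ^^ a) i = i" using rot_pow[OF i, where m=a and k=k] i by simp
  moreover have "0 < a" using i by simp
  ultimately show ?thesis unfolding orbit_altdef by (intro CollectI exI[of _ a]) simp
qed

lemma ctype_cycle_pow:
  assumes g: "permutation g"
  shows "ctype (orbit g x) (g ^^ k) = Gk k (card (orbit g x))"
proof -
  define Ob where "Ob = orbit g x"
  have xO: "x \<in> Ob" unfolding Ob_def by (rule permutation_self_in_orbit[OF g])
  define d where "d = funpow_dist1 g x x"
  define \<phi> where "\<phi> = (\<lambda>n. (g ^^ n) x)"
  have Oim: "Ob = \<phi> ` {..<d}" unfolding Ob_def \<phi>_def d_def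
    using orbit_conv_funpow_dist1[OF xO[unfolded Ob_def]] by (simp add: atLeast0LessThan)
  have inj: "inj_on \<phi> {..<d}" unfolding \<phi>_def d_def
    using inj_on_funpow_dist1[OF xO[unfolded Ob_def]] by (simp add: atLeast0LessThan)
  have bij: "bij_betw \<phi> {..<d} Ob" using Oim inj by (simp add: bij_betw_def)
  have cardO: "card Ob = d" using Oim inj by (simp add: card_image)
  have dx: "(g ^^ d) x = x" unfolding d_def using funpow_dist1_prop[OF xO[unfolded Ob_def]] .
  have "ctype Ob (g ^^ k) = ctype {..<d} (rotk d k)"
  proof (rule ctype_conj[OF bij])
    show "\<forall>i\<in>{..<d}. rotk d k i \<in> {..<d}" by (auto simp: rotk_def)
    show "\<forall>i\<in>{..<d}. i \<in> orbit (rotk d k) i" using rot_self by blast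
    show "\<forall>i\<in>{..<d}. (g ^^ k) (\<phi> i) = \<phi> (rotk d k i)"
    proof
      fix i
      have "(g ^^ k) (\<phi> i) = (g ^^ (i + k)) x" unfolding \<phi>_def
        by (metis add.commute comp_apply funpow_add)
      also have "\<dots> = (g ^^ ((i + k) mod d)) x" using funpow_mod_eq[where f=g and n=d and x=x and m="i + k", OF dx] by simp
      finally show "(g ^^ k) (\<phi> i) = \<phi> (rotk d k i)" by (simp add: \<phi>_def rotk_def)
    qed
  qed
  then show ?thesis unfolding Gk_def Ob_def[symmetric] cardO .
qed

lemma ctype_cycle:
  assumes g: "permutation g"
  shows "ctype (orbit g x) g = {# card (orbit g x) #}"
proof -
  have "(\<lambda>y. orbit g y) ` orbit g x = {orbit g x}"
    using cyclic_on_orbit'[OF g, of x] orbit_cyclic_eq3 orbit_nonempty[of g x] by fastforce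
  then show ?thesis unfolding ctype_def by simp
qed

lemma ctype_pow:
  assumes "permutation g" "finite A" "\<forall>x\<in>A. g x \<in> A"
  shows "ctype A (g ^^ k) = sum_mset (image_mset (Gk k) (ctype A g))"
  using assms(2,3)
proof (induction "card A" arbitrary: A rule: less_induct)
  case less
  show ?case
  proof (cases "A = {}")
    case True
    then show ?thesis by (simp add: ctype_def)
  next
    case False
    then obtain x where xA: "x \<in> A" by blast
    define Ob where "Ob = orbit g x"
    have OA: "Ob \<subseteq> A" unfolding Ob_def using orbit_sub_inv[OF less.prems(2) xA] .
    have xO: "x \<in> Ob" unfolding Ob_def by (rule permutation_self_in_orbit[OF assms(1)])
    define A' where "A' = A - Ob"
    have invO: "\<forall>y\<in>Ob. g y \<in> Ob" unfolding Ob_def by (auto intro: orbit.step)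
    have invA': "\<forall>y\<in>A'. g y \<in> A'"
    proof
      fix y assume y: "y \<in> A'"
      have "g y \<in> A" using y less.prems(2) A'_def by auto
      moreover have "g y \<notin> Ob"
      proof
        assume gy: "g y \<in> Ob"
        have "orbit g (g y) = Ob" unfolding Ob_def
          by (rule orbit_cyclic_eq3[OF cyclic_on_orbit'[OF assms(1)] gy[unfolded Ob_def]])
        moreover have "orbit g (g y) = orbit g y" by (rule permutation_orbit_step[OF assms(1)])
        moreover have "y \<in> orbit g y" by (rule permutation_self_in_orbit[OF assms(1)])
        ultimately show False using y A'_def by auto
      qed
      ultimately show "g y \<in> A'" unfolding A'_def by auto
    qed
    have finA': "finite A'" using less.prems(1) A'_def by simp
    have finO: "finite Ob" using less.prems(1) OA finite_subset by blast
    have ps: "A' \<subset> A" unfolding A'_def using xO xA by blast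
    have lt: "card A' < card A" by (rule psubset_card_mono[OF less.prems(1) ps])
    have IH: "ctype A' (g ^^ k) = sum_mset (image_mset (Gk k) (ctype A' g))"
      using less.hyps[OF lt finA' invA'] .
    have Aeq: "A = Ob \<union> A'" unfolding A'_def using OA by auto
    have dis: "Ob \<inter> A' = {}" unfolding A'_def by auto
    have split: "ctype A h = ctype Ob h + ctype A' h" if hO: "\<forall>y\<in>Ob. h y \<in> Ob" and hA: "\<forall>y\<in>A'. h y \<in> A'" for h
      unfolding Aeq
      by (rule ctype_split[OF finO finA' dis]) (use orbit_sub_inv[OF hO] orbit_sub_inv[OF hA] in blast)+
    have s1: "ctype A g = {# card Ob #} + ctype A' g"
      using split[OF invO invA'] ctype_cycle[OF assms(1), of x] Ob_def by simp
    have s2: "ctype A (g ^^ k) = Gk k (card Ob) + ctype A' (g ^^ k)"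
      using split[OF funpow_inv[OF invO] funpow_inv[OF invA']] ctype_cycle_pow[OF assms(1), of x k] Ob_def by simp
    show ?thesis using s1 s2 IH by simp
  qed
qed

lemma type_pow:
  assumes "g permutes {..<n}"
  shows "cycle_type n (g ^^ k) = sum_mset (image_mset (Gk k) (cycle_type n g))"
  unfolding cycle_type_def ctype_def[symmetric]
proof (rule ctype_pow)
  show "permutation g" using assms permutation_permutes by blast
  show "\<forall>x\<in>{..<n}. g x \<in> {..<n}" using permutes_in_image[OF assms] by blast
qed simp

lemma rep_sum: "sum_mset (image_mset f (repeat_mset r M)) = repeat_mset r (sum_mset (image_mset f M))"
  by (induction r) auto

lemma type_id:
  assumes "g permutes {..<n}"
  shows "(g = id) \<longleftrightarrow> (\<forall>a\<in>#cycle_type n g. a = 1)"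
proof
  assume "g = id"
  show "\<forall>a\<in>#cycle_type n g. a = 1"
  proof
    fix a assume a: "a \<in># cycle_type n g"
    have "a \<in> card ` set_mset (mset_set ((\<lambda>x. orbit g x) ` {..<n}))"
      using a unfolding cycle_type_def by simp
    then obtain S where S: "a = card S" "S \<in> set_mset (mset_set ((\<lambda>x. orbit g x) ` {..<n}))"
      by (rule imageE)
    have "S \<in> (\<lambda>x. orbit g x) ` {..<n}" using S(2) by (rule in_mset_set_imp)
    then obtain x where "S = orbit g x" "x \<in> {..<n}" by (rule imageE)
    then have "S = {x}" using \<open>g = id\<close> orbit_eq_singleton_iff[of g x] by simp
    then show "a = 1" using S(1) by simp
  qed
next
  assume A: "\<forall>a\<in>#cycle_type n g. a = 1"
  have perm: "permutation g" using assms permutation_permutes by blast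
  show "g = id"
  proof
    fix x
    show "g x = id x"
    proof (cases "x < n")
      case True
      have "card (orbit g x) \<in># cycle_type n g" unfolding cycle_type_def using True by simp
      then have c1: "card (orbit g x) = 1" using A by blast
      have "x \<in> orbit g x" by (rule permutation_self_in_orbit[OF perm])
      moreover have "g x \<in> orbit g x" by (rule orbit.base)
      moreover obtain y where "orbit g x = {y}" by (rule card_1_singletonE[OF c1])
      ultimately show ?thesis by simp
    next
      case False
      then show ?thesis using permutes_not_in[OF assms] by simp
    qed
  qed
qed

lemma in_repeat: "1 \<le> r \<Longrightarrow> a \<in># repeat_mset r M \<longleftrightarrow> a \<in># M"
proof -
  assume r: "1 \<le> r"
  have "a \<in># repeat_mset r M \<longleftrightarrow> 0 < count (repeat_mset r M) a" by (rule count_greater_zero_iff[symmetric])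
  also have "\<dots> \<longleftrightarrow> 0 < count M a" using r by (simp only: count_repeat_mset) simp
  also have "\<dots> \<longleftrightarrow> a \<in># M" by (rule count_greater_zero_iff)
  finally show ?thesis .
qed

lemma set_repeat:
  assumes "1 \<le> r" shows "set_mset (repeat_mset r M) = set_mset M"
proof (rule set_eqI)
  fix a show "a \<in> set_mset (repeat_mset r M) \<longleftrightarrow> a \<in> set_mset M" by (rule in_repeat[OF assms])
qed

lemma pow_eq_iff:
  assumes "bij f" "j \<le> i"
  shows "(f ^^ i = f ^^ j) \<longleftrightarrow> (f ^^ (i - j) = id)"
proof -
  have ij: "f ^^ i = f ^^ (i - j) \<circ> f ^^ j" using assms(2) by (simp add: funpow_add[symmetric])
  have b: "bij (f ^^ j)" using bij_betw_funpow[OF assms(1)] .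
  show ?thesis
  proof
    assume "f ^^ i = f ^^ j"
    then have e: "f ^^ (i - j) \<circ> f ^^ j = f ^^ j" using ij by simp
    show "f ^^ (i - j) = id"
    proof
      fix y
      obtain z where z: "y = (f ^^ j) z" using b by (metis bij_pointE)
      have "(f ^^ (i - j)) ((f ^^ j) z) = (f ^^ j) z" using fun_cong[OF e, of z] by simp
      then show "(f ^^ (i - j)) y = id y" using z by simp
    qed
  next
    assume "f ^^ (i - j) = id"
    then show "f ^^ i = f ^^ j" using ij by simp
  qed
qed

lemma rep_inj: "1 \<le> r \<Longrightarrow> repeat_mset r A = repeat_mset r B \<Longrightarrow> A = B"
proof (rule multiset_eqI)
  fix x assume r: "1 \<le> r" and e: "repeat_mset r A = repeat_mset r B"
  have "count (repeat_mset r A) x = count (repeat_mset r B) x" using e by simp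
  then have "r * count A x = r * count B x" by simp
  then show "count A x = count B x" using r by simp
qed

theorem mainTheorem2:
  fixes n r :: nat and \<alpha> :: "nat multiset" and \<sigma> \<tau> :: "nat \<Rightarrow> nat"
  assumes "is_partition n \<alpha>" and "1 \<le> r"
    and "\<sigma> permutes {..<n}" and "cycle_type n \<sigma> = \<alpha>"
    and "\<tau> permutes {..<n * r}" and "cycle_type (n * r) \<tau> = repeat_mset r \<alpha>"
  shows "plethysm_p1_pow (cyclic_C n \<sigma>) r = cyclic_C (n * r) \<tau>"
proof -
  have T: "cycle_type (n * r) (\<tau> ^^ k) = repeat_mset r (cycle_type n (\<sigma> ^^ k))" for k
  proof -
    have "cycle_type (n * r) (\<tau> ^^ k) = sum_mset (image_mset (Gk k) (repeat_mset r \<alpha>))"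
      using type_pow[OF assms(5), of k] assms(6) by simp
    also have "\<dots> = repeat_mset r (sum_mset (image_mset (Gk k) \<alpha>))" by (rule rep_sum)
    also have "\<dots> = repeat_mset r (cycle_type n (\<sigma> ^^ k))"
      using type_pow[OF assms(3), of k] assms(4) by simp
    finally show ?thesis .
  qed
  have idE: "(\<sigma> ^^ k = id) \<longleftrightarrow> (\<tau> ^^ k = id)" for k
    unfolding type_id[OF my_permutes_funpow[OF assms(3)], of k] type_id[OF my_permutes_funpow[OF assms(5)], of k]
      T[of k] set_repeat[OF assms(2)] ..
  have bs: "bij \<sigma>" using assms(3) permutes_bij by blast
  have bt: "bij \<tau>" using assms(5) permutes_bij by blast
  have E: "(\<sigma> ^^ i = \<sigma> ^^ j) \<longleftrightarrow> (\<tau> ^^ i = \<tau> ^^ j)" for i j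
  proof (cases "j \<le> i")
    case True
    then show ?thesis using pow_eq_iff[OF bs True] pow_eq_iff[OF bt True] idE by simp
  next
    case False
    then have ji: "i \<le> j" by simp
    then show ?thesis using pow_eq_iff[OF bs ji] pow_eq_iff[OF bt ji] idE by metis
  qed
  define jj where "jj g = \<tau> ^^ (SOME k. g = \<sigma> ^^ k)" for g
  have jk: "jj (\<sigma> ^^ k) = \<tau> ^^ k" for k
  proof -
    have "\<sigma> ^^ k = \<sigma> ^^ (SOME k'. \<sigma> ^^ k = \<sigma> ^^ k')" by (rule someI_ex) blast
    then show ?thesis unfolding jj_def using E by metis
  qed
  have bij: "bij_betw jj (cyc_gp \<sigma>) (cyc_gp \<tau>)"
  proof -
    have "inj_on jj (cyc_gp \<sigma>)"
      unfolding inj_on_def cyc_gp_def using jk E by auto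
    moreover have "jj ` cyc_gp \<sigma> = cyc_gp \<tau>"
    proof -
      have r: "cyc_gp f = range (\<lambda>k. f ^^ k)" for f by (auto simp: cyc_gp_def)
      show ?thesis unfolding r image_image jk ..
    qed
    ultimately show ?thesis by (simp add: bij_betw_def)
  qed
  have tj: "cycle_type (n * r) (jj g) = repeat_mset r (cycle_type n g)" if "g \<in> cyc_gp \<sigma>" for g
    using that jk T unfolding cyc_gp_def by auto
  have ord: "perm_order \<tau> = perm_order \<sigma>" unfolding perm_order_def using bij_betw_same_card[OF bij] by simp
  have S: "(\<Sum>g\<in>cyc_gp \<tau>. if cycle_type (n * r) g = \<mu> then 1 else (0::rat))
      = (\<Sum>g\<in>cyc_gp \<sigma>. if repeat_mset r (cycle_type n g) = \<mu> then 1 else 0)" for \<mu>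
  proof -
    have "(\<Sum>g\<in>cyc_gp \<tau>. if cycle_type (n * r) g = \<mu> then 1 else (0::rat))
        = (\<Sum>g\<in>cyc_gp \<sigma>. if cycle_type (n * r) (jj g) = \<mu> then 1 else (0::rat))"
      by (rule sum.reindex_bij_betw[OF bij, symmetric])
    also have "\<dots> = (\<Sum>g\<in>cyc_gp \<sigma>. if repeat_mset r (cycle_type n g) = \<mu> then 1 else 0)"
      by (rule sum.cong) (simp_all add: tj)
    finally show ?thesis .
  qed
  show ?thesis
  proof (rule ext)
    fix \<mu>
    show "plethysm_p1_pow (cyclic_C n \<sigma>) r \<mu> = cyclic_C (n * r) \<tau> \<mu>"
    proof (cases "\<exists>la. repeat_mset r la = \<mu>")
      case True
      then obtain la where la: "repeat_mset r la = \<mu>" by blast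
      have eqv: "(repeat_mset r (cycle_type n g) = \<mu>) \<longleftrightarrow> (cycle_type n g = la)" for g
      proof
        assume "repeat_mset r (cycle_type n g) = \<mu>"
        then have "repeat_mset r (cycle_type n g) = repeat_mset r la" using la by simp
        then show "cycle_type n g = la" by (rule rep_inj[OF assms(2)])
      next
        assume "cycle_type n g = la"
        then show "repeat_mset r (cycle_type n g) = \<mu>" using la by simp
      qed
      have set: "{la'. repeat_mset r la' = \<mu> \<and> cyclic_C n \<sigma> la' \<noteq> 0}
          = (if cyclic_C n \<sigma> la \<noteq> 0 then {la} else {})"
      proof -
        have inj': "repeat_mset r x = \<mu> \<longleftrightarrow> x = la" for x
          using la rep_inj[OF assms(2), of x la] by auto
        show ?thesis unfolding inj' by auto
      qed
      have rhs: "cyclic_C (n * r) \<tau> \<mu> = cyclic_C n \<sigma> la"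
        unfolding cyclic_C_def S ord eqv ..
      show ?thesis unfolding rhs plethysm_p1_pow_def set by simp
    next
      case False
      then have set: "{la'. repeat_mset r la' = \<mu> \<and> cyclic_C n \<sigma> la' \<noteq> 0} = {}" by blast
      have F: "repeat_mset r x \<noteq> \<mu>" for x using False by blast
      have "cyclic_C (n * r) \<tau> \<mu> = 0"
        unfolding cyclic_C_def S by (simp add: F)
      then show ?thesis unfolding plethysm_p1_pow_def set by simp
    qed
  qed
qed

end
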